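(* Define integers $\lambda_r$ for $r\ge 1$ by $\lambda_1=1$ and $\lambda_r = 2\left(3^{\lceil r/2 \rceil}+1\right)\lambda_{\lceil r/2 \rceil}$ for $r \ge 2$. Then for every integer $t\ge 0$, $\lambda_{2^t} = 2^{t-1}\left(3^{2^t}-1\right)$. Consequently, for every $n$ of the form $n=3^{2^t}$ with $t\ge 0$ an integer, $g(n,3) \le \frac{1}{2}\, n\log_3 n$.
   Context: For integers $2\le k\le n$, let $S_n$ denote the set of permutations of $[n]=\{1,\dots,n\}$ (written as sequences), and $S_{n,k}$ the set of all sequences of $k$ distinct elements of $[n]$. A sequence $\kappa\in S_{n,k}$ is a subsequence of a permutation $\pi\in S_n$ if its elements appear in $\pi$ in the same relative order as in $\kappa$. A perfect sequence covering array ${\rm PSCA}(n,k)$ with multiplicity $\lambda$ (a positive integer) is a multiset $X$ of elements of $S_n$ such that every $\kappa\in S_{n,k}$ is a subsequence of exactly $\lambda$ elements of $X$ (counted with multiplicity). $g(n,k)$ denotes the smallest $\lambda$ for which a ${\rm PSCA}(n,k)$ with multiplicity $\lambda$ exists. *)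

theory Defs
  imports Complex_Main "HOL-Library.Multiset" "HOL-Library.Sublist"
begin

definition perms_seq :: "nat \<Rightarrow> nat list set" where
  "perms_seq n = {xs. distinct xs \<and> set xs = {1..n}}"

definition kseqs :: "nat \<Rightarrow> nat \<Rightarrow> nat list set" where
  "kseqs n k = {xs. distinct xs \<and> length xs = k \<and> set xs \<subseteq> {1..n}}"

definition is_PSCA :: "nat \<Rightarrow> nat \<Rightarrow> nat \<Rightarrow> nat list multiset \<Rightarrow> bool" where
  "is_PSCA n k lam X \<longleftrightarrow>
     (\<forall>\<pi>\<in>#X. \<pi> \<in> perms_seq n) \<and>
     (\<forall>\<kappa>\<in>kseqs n k. size (filter_mset (\<lambda>\<pi>. subseq \<kappa> \<pi>) X) = lam)"

definition g :: "nat \<Rightarrow> nat \<Rightarrow> nat" where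
  "g n k = (LEAST lam. 0 < lam \<and> (\<exists>X. is_PSCA n k lam X))"

text \<open>lambda_1 = 1, lambda_r = 2 (3^ceil(r/2) + 1) lambda_ceil(r/2) for r >= 2;
  ceil(r/2) = (r+1) div 2. The value at 0 is irrelevant.\<close>
fun lam :: "nat \<Rightarrow> nat" where
  "lam 0 = 0"
| "lam (Suc 0) = 1"
| "lam (Suc (Suc m)) = 2 * (3 ^ ((m + 3) div 2) + 1) * lam ((m + 3) div 2)"

end

theory Submission
  imports Defs "HOL-Number_Theory.Residues" "HOL-Algebra.Weak_Morphisms" "HOL-Library.Nat_Bijection"
begin

lemma lam_step: "lam (2 ^ Suc t) = 2 * (3 ^ (2 ^ t) + 1) * lam (2 ^ t)"
proof -
  have "(2::nat) \<le> 2 * 2 ^ t" using one_le_power[of "2::nat" t] by simp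
  then have e: "(2::nat) ^ Suc t = Suc (Suc (2 * 2 ^ t - 2))"
  proof -
    have "\<And>a::nat. 2 \<le> a \<Longrightarrow> a = Suc (Suc (a - 2))" by arith
    then show ?thesis using \<open>2 \<le> 2 * 2 ^ t\<close> by (metis power_Suc)
  qed
  have d: "(2 * 2 ^ t - 2 + 3) div 2 = (2::nat) ^ t"
    using one_le_power[of "2::nat" t] by simp
  show ?thesis by (subst e, subst lam.simps(3), simp only: d)
qed

lemma lam_formula: "real (lam (2 ^ t)) = 2 powr (real t - 1) * (3 ^ (2 ^ t) - 1)"
proof (induction t)
  case 0
  then show ?case by (simp add: powr_minus)
next
  case (Suc t)
  have "real (lam (2 ^ Suc t)) = 2 * (3 ^ (2 ^ t) + 1) * real (lam (2 ^ t))"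
    by (simp only: lam_step of_nat_mult of_nat_add of_nat_power) simp
  also have "\<dots> = 2 * (3 ^ (2 ^ t) + 1) * (2 powr (real t - 1) * (3 ^ (2 ^ t) - 1))"
    using Suc by simp
  also have "\<dots> = (2 * 2 powr (real t - 1)) * ((3 ^ (2 ^ t))\<^sup>2 - 1)"
    by (simp add: power2_eq_square algebra_simps)
  also have "2 * 2 powr (real t - 1) = (2::real) powr (real (Suc t) - 1)"
  proof -
    have "(2::real) powr (real t - 1 + 1) = 2 powr (real t - 1) * 2 powr 1"
      by (rule powr_add)
    then show ?thesis by simp
  qed
  also have "((3::real) ^ (2 ^ t))\<^sup>2 = 3 ^ (2 ^ Suc t)"
    by (simp add: power_mult[symmetric] mult.commute)
  finally show ?case .
qed

section \<open>Abstract PSCAs via rankings\<close>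

definition psca :: "'a set \<Rightarrow> nat \<Rightarrow> ('a \<Rightarrow> nat) multiset \<Rightarrow> bool" where
  "psca V L Y \<longleftrightarrow> (\<forall>r\<in>#Y. inj_on r V) \<and>
     (\<forall>x\<in>V. \<forall>y\<in>V. \<forall>z\<in>V. x \<noteq> y \<and> y \<noteq> z \<and> x \<noteq> z \<longrightarrow>
        size (filter_mset (\<lambda>r. r x < r y \<and> r y < r z) Y) = L)"

lemma size_filter_sum: "size (filter_mset P M) = (\<Sum>r\<in>#M. if P r then 1 else (0::nat))"
  by (induction M) auto

lemma sum_mset_cong':
  fixes f g :: "'a \<Rightarrow> 'b::comm_monoid_add"
  shows "(\<And>x. x \<in># M \<Longrightarrow> f x = g x) \<Longrightarrow> (\<Sum>x\<in>#M. f x) = (\<Sum>x\<in>#M. g x)"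
  by (metis image_mset_cong)

lemma psca_transport:
  assumes h: "bij_betw h W V" and P: "psca V L Y"
  shows "psca W L (image_mset (\<lambda>r. r \<circ> h) Y)"
  unfolding psca_def
proof (intro conjI ballI impI)
  fix r assume "r \<in># image_mset (\<lambda>r. r \<circ> h) Y"
  then obtain s where s: "s \<in># Y" "r = s \<circ> h" by auto
  have "inj_on s V" using P s(1) unfolding psca_def by auto
  then show "inj_on r W" using h s(2)
    by (metis bij_betw_def comp_inj_on)
next
  fix x y z assume xyz: "x \<in> W" "y \<in> W" "z \<in> W" "x \<noteq> y \<and> y \<noteq> z \<and> x \<noteq> z"
  have hV: "h x \<in> V" "h y \<in> V" "h z \<in> V" using xyz h by (auto simp: bij_betw_def)
  have hd: "h x \<noteq> h y \<and> h y \<noteq> h z \<and> h x \<noteq> h z" using xyz h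
    by (auto simp: bij_betw_def inj_on_def)
  have "size (filter_mset (\<lambda>r. r x < r y \<and> r y < r z) (image_mset (\<lambda>r. r \<circ> h) Y))
     = size (filter_mset (\<lambda>r. r (h x) < r (h y) \<and> r (h y) < r (h z)) Y)"
    by (simp add: filter_mset_image_mset)
  also have "\<dots> = L" using P hV hd unfolding psca_def by blast
  finally show "size (filter_mset (\<lambda>r. r x < r y \<and> r y < r z) (image_mset (\<lambda>r. r \<circ> h) Y)) = L" .
qed

lemma psca_pair:
  assumes P: "psca V L Y" and abc: "a \<in> V" "b \<in> V" "c \<in> V" "a \<noteq> b" "c \<noteq> a" "c \<noteq> b"
  shows "size (filter_mset (\<lambda>r. r a < r b) Y) = 3 * L"
proof -
  have "size (filter_mset (\<lambda>r. r a < r b) Y) = (\<Sum>r\<in>#Y. if r a < r b then 1 else (0::nat))"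
    by (rule size_filter_sum)
  also have "\<dots> = (\<Sum>r\<in>#Y. (if r c < r a \<and> r a < r b then 1 else 0)
       + (if r a < r c \<and> r c < r b then 1 else 0) + (if r a < r b \<and> r b < r c then 1 else (0::nat)))"
  proof (rule sum_mset_cong')
    fix r assume "r \<in># Y"
    then have "inj_on r V" using P unfolding psca_def by auto
    then have "r c \<noteq> r a" "r c \<noteq> r b" using abc by (auto simp: inj_on_def)
    then show "(if r a < r b then 1 else (0::nat)) = (if r c < r a \<and> r a < r b then 1 else 0)
       + (if r a < r c \<and> r c < r b then 1 else 0) + (if r a < r b \<and> r b < r c then 1 else (0::nat))"
      by auto
  qed
  also have "\<dots> = size (filter_mset (\<lambda>r. r c < r a \<and> r a < r b) Y)
     + size (filter_mset (\<lambda>r. r a < r c \<and> r c < r b) Y)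
     + size (filter_mset (\<lambda>r. r a < r b \<and> r b < r c) Y)"
    by (simp only: sum_mset.distrib size_filter_sum)
  also have "\<dots> = 3 * L" using P abc unfolding psca_def by auto
  finally show ?thesis .
qed

lemma subseq_sorted:
  fixes r :: "'a \<Rightarrow> nat"
  assumes "sorted_wrt (\<lambda>a b. r a < r b) ys"
  shows "subseq xs ys \<longleftrightarrow> set xs \<subseteq> set ys \<and> sorted_wrt (\<lambda>a b. r a < r b) xs"
  using assms
proof (induction ys arbitrary: xs)
  case Nil
  then show ?case by (auto dest: list_emb_Nil2)
next
  case (Cons y ys)
  then have IH: "\<And>xs. subseq xs ys \<longleftrightarrow> set xs \<subseteq> set ys \<and> sorted_wrt (\<lambda>a b. r a < r b) xs"
    and ys: "\<forall>b\<in>set ys. r y < r b" by auto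
  show ?case
  proof (cases xs)
    case Nil
    then show ?thesis by auto
  next
    case (Cons x xs')
    show ?thesis
    proof (cases "x = y")
      case True
      have "subseq xs (y # ys) \<longleftrightarrow> subseq xs' ys" using Cons True by simp
      also have "\<dots> \<longleftrightarrow> set xs \<subseteq> set (y # ys) \<and> sorted_wrt (\<lambda>a b. r a < r b) xs"
        using IH[of xs'] ys Cons True by auto
      finally show ?thesis .
    next
      case False
      have "subseq xs (y # ys) \<longleftrightarrow> subseq xs ys" using Cons False by simp
      also have "\<dots> \<longleftrightarrow> set xs \<subseteq> set (y # ys) \<and> sorted_wrt (\<lambda>a b. r a < r b) xs"
        using IH[of xs] ys Cons False by fastforce
      finally show ?thesis .
    qed
  qed
qed

lemma sorted_wrt_sort_key:
  fixes r :: "'a \<Rightarrow> nat"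
  assumes "inj_on r (set xs)" "distinct xs"
  shows "sorted_wrt (\<lambda>a b. r a < r b) (sort_key r xs)"
proof -
  have "sorted (map r (sort_key r xs))" by simp
  moreover have "distinct (map r (sort_key r xs))"
    using assms by (simp add: distinct_map)
  ultimately have "sorted_wrt (<) (map r (sort_key r xs))"
    by (simp add: strict_sorted_iff)
  then show ?thesis by (simp add: sorted_wrt_map)
qed

lemma psca_to_isPSCA:
  assumes P: "psca {1..n} L Y"
  shows "is_PSCA n 3 L (image_mset (\<lambda>r. sort_key r [1..<Suc n]) Y)"
  unfolding is_PSCA_def
proof (intro conjI ballI)
  fix \<pi> assume "\<pi> \<in># image_mset (\<lambda>r. sort_key r [1..<Suc n]) Y"
  then show "\<pi> \<in> perms_seq n" by (auto simp: perms_seq_def)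
next
  fix \<kappa> assume "\<kappa> \<in> kseqs n 3"
  then have k: "distinct \<kappa>" "length \<kappa> = 3" "set \<kappa> \<subseteq> {1..n}" by (auto simp: kseqs_def)
  then obtain x y z where xyz: "\<kappa> = [x, y, z]"
    by (metis (no_types, lifting) length_0_conv length_Suc_conv numeral_3_eq_3)
  have d: "x \<noteq> y \<and> y \<noteq> z \<and> x \<noteq> z" "x \<in> {1..n}" "y \<in> {1..n}" "z \<in> {1..n}"
    using k xyz by auto
  have "size (filter_mset (\<lambda>\<pi>. subseq \<kappa> \<pi>) (image_mset (\<lambda>r. sort_key r [1..<Suc n]) Y))
      = size (filter_mset (\<lambda>r. subseq \<kappa> (sort_key r [1..<Suc n])) Y)"
    by (simp add: filter_mset_image_mset)
  also have "filter_mset (\<lambda>r. subseq \<kappa> (sort_key r [1..<Suc n])) Y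
      = filter_mset (\<lambda>r. r x < r y \<and> r y < r z) Y"
  proof (rule filter_mset_cong)
    fix r assume "r \<in># Y"
    then have "inj_on r {1..n}" using P unfolding psca_def by auto
    then have "sorted_wrt (\<lambda>a b. r a < r b) (sort_key r [1..<Suc n])"
      by (intro sorted_wrt_sort_key) (simp_all only: set_upt atLeastLessThanSuc_atLeastAtMost distinct_upt)
    then show "subseq \<kappa> (sort_key r [1..<Suc n]) = (r x < r y \<and> r y < r z)"
      using d by (simp add: subseq_sorted xyz) linarith
  qed simp
  also have "size \<dots> = L" using P d unfolding psca_def by blast
  finally show "size (filter_mset (\<lambda>\<pi>. subseq \<kappa> \<pi>) (image_mset (\<lambda>r. sort_key r [1..<Suc n]) Y)) = L" .
qed

definition base_Y :: "(nat \<Rightarrow> nat) multiset" where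
  "base_Y = mset (map (\<lambda>\<sigma> i. \<sigma> ! i) [[0,1,2],[0,2,1],[1,0,2],[1,2,0],[2,0,1],[2,1,0]])"

lemma base_psca: "psca {..<3} 1 base_Y"
proof -
  have e: "{..<3::nat} = {0,1,2}" by auto
  show ?thesis
    unfolding psca_def e base_Y_def
    by (auto simp: inj_on_def)
qed

section \<open>Quadratic extensions\<close>

definition qext :: "('a, 'b) ring_scheme \<Rightarrow> 'a \<Rightarrow> ('a \<times> 'a) ring" where
  "qext R d = \<lparr>carrier = carrier R \<times> carrier R,
     mult = (\<lambda>p q. (add R (mult R (fst p) (fst q)) (mult R d (mult R (snd p) (snd q))),
                     add R (mult R (fst p) (snd q)) (mult R (snd p) (fst q)))),
     one = (one R, zero R),
     zero = (zero R, zero R),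
     add = (\<lambda>p q. (add R (fst p) (fst q), add R (snd p) (snd q)))\<rparr>"

lemma qext_simps:
  "carrier (qext R d) = carrier R \<times> carrier R"
  "mult (qext R d) p q = (add R (mult R (fst p) (fst q)) (mult R d (mult R (snd p) (snd q))),
                     add R (mult R (fst p) (snd q)) (mult R (snd p) (fst q)))"
  "one (qext R d) = (one R, zero R)"
  "zero (qext R d) = (zero R, zero R)"
  "add (qext R d) p q = (add R (fst p) (fst q), add R (snd p) (snd q))"
  by (simp_all add: qext_def)

lemma (in field) qext_cring:
  assumes d: "d \<in> carrier R"
  shows "cring (qext R d)"
proof (rule cringI)
  show "abelian_group (qext R d)"
  proof (rule abelian_groupI, simp_all only: qext_simps)
    fix x y z :: "'a \<times> 'a"
    assume x: "x \<in> carrier R \<times> carrier R" and y: "y \<in> carrier R \<times> carrier R"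
      and z: "z \<in> carrier R \<times> carrier R"
    obtain x1 x2 y1 y2 z1 z2 where e: "x = (x1, x2)" "y = (y1, y2)" "z = (z1, z2)"
      by (cases x, cases y, cases z)
    have c: "x1 \<in> carrier R" "x2 \<in> carrier R" "y1 \<in> carrier R" "y2 \<in> carrier R"
       "z1 \<in> carrier R" "z2 \<in> carrier R" using x y z e by auto
    show "(fst x \<oplus> fst y, snd x \<oplus> snd y) \<in> carrier R \<times> carrier R" using c e by simp
    show "(fst (fst x \<oplus> fst y, snd x \<oplus> snd y) \<oplus> fst z, snd (fst x \<oplus> fst y, snd x \<oplus> snd y) \<oplus> snd z) =
          (fst x \<oplus> fst (fst y \<oplus> fst z, snd y \<oplus> snd z), snd x \<oplus> snd (fst y \<oplus> fst z, snd y \<oplus> snd z))"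
      using c e by (simp add: a_assoc)
    show "(fst x \<oplus> fst y, snd x \<oplus> snd y) = (fst y \<oplus> fst x, snd y \<oplus> snd x)"
      using c e by (simp add: a_comm)
  next
    show "(\<zero>, \<zero>) \<in> carrier R \<times> carrier R" by simp
  next
    fix x :: "'a \<times> 'a" assume x: "x \<in> carrier R \<times> carrier R"
    then show "(fst (\<zero>, \<zero>) \<oplus> fst x, snd (\<zero>, \<zero>) \<oplus> snd x) = x" by (cases x) simp
    show "\<exists>y\<in>carrier R \<times> carrier R. (fst y \<oplus> fst x, snd y \<oplus> snd x) = (\<zero>, \<zero>)"
      using x by (intro bexI[of _ "(\<ominus> fst x, \<ominus> snd x)"]) (auto simp: l_neg)
  qed
next
  show "comm_monoid (qext R d)"
  proof (rule comm_monoidI, simp_all only: qext_simps)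
    fix x y z :: "'a \<times> 'a"
    assume x: "x \<in> carrier R \<times> carrier R" and y: "y \<in> carrier R \<times> carrier R"
      and z: "z \<in> carrier R \<times> carrier R"
    obtain x1 x2 y1 y2 z1 z2 where e: "x = (x1, x2)" "y = (y1, y2)" "z = (z1, z2)"
      by (cases x, cases y, cases z)
    have c: "x1 \<in> carrier R" "x2 \<in> carrier R" "y1 \<in> carrier R" "y2 \<in> carrier R"
       "z1 \<in> carrier R" "z2 \<in> carrier R" using x y z e by auto
    show "(fst x \<otimes> fst y \<oplus> d \<otimes> (snd x \<otimes> snd y), fst x \<otimes> snd y \<oplus> snd x \<otimes> fst y) \<in> carrier R \<times> carrier R"
      using c e d by simp
    have "x1 \<otimes> y1 \<oplus> d \<otimes> (x2 \<otimes> y2) = y1 \<otimes> x1 \<oplus> d \<otimes> (y2 \<otimes> x2)" using c d by algebra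
    moreover have "x1 \<otimes> y2 \<oplus> x2 \<otimes> y1 = y1 \<otimes> x2 \<oplus> y2 \<otimes> x1" using c d by algebra
    ultimately show "(fst x \<otimes> fst y \<oplus> d \<otimes> (snd x \<otimes> snd y), fst x \<otimes> snd y \<oplus> snd x \<otimes> fst y) =
          (fst y \<otimes> fst x \<oplus> d \<otimes> (snd y \<otimes> snd x), fst y \<otimes> snd x \<oplus> snd y \<otimes> fst x)"
      using e by simp
    have "(x1 \<otimes> y1 \<oplus> d \<otimes> (x2 \<otimes> y2)) \<otimes> z1 \<oplus> d \<otimes> ((x1 \<otimes> y2 \<oplus> x2 \<otimes> y1) \<otimes> z2)
        = x1 \<otimes> (y1 \<otimes> z1 \<oplus> d \<otimes> (y2 \<otimes> z2)) \<oplus> d \<otimes> (x2 \<otimes> (y1 \<otimes> z2 \<oplus> y2 \<otimes> z1))"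
      using c d by algebra
    moreover have "(x1 \<otimes> y1 \<oplus> d \<otimes> (x2 \<otimes> y2)) \<otimes> z2 \<oplus> (x1 \<otimes> y2 \<oplus> x2 \<otimes> y1) \<otimes> z1
        = x1 \<otimes> (y1 \<otimes> z2 \<oplus> y2 \<otimes> z1) \<oplus> x2 \<otimes> (y1 \<otimes> z1 \<oplus> d \<otimes> (y2 \<otimes> z2))"
      using c d by algebra
    ultimately show "(fst (fst x \<otimes> fst y \<oplus> d \<otimes> (snd x \<otimes> snd y), fst x \<otimes> snd y \<oplus> snd x \<otimes> fst y) \<otimes> fst z \<oplus>
           d \<otimes> (snd (fst x \<otimes> fst y \<oplus> d \<otimes> (snd x \<otimes> snd y), fst x \<otimes> snd y \<oplus> snd x \<otimes> fst y) \<otimes> snd z),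
           fst (fst x \<otimes> fst y \<oplus> d \<otimes> (snd x \<otimes> snd y), fst x \<otimes> snd y \<oplus> snd x \<otimes> fst y) \<otimes> snd z \<oplus>
           snd (fst x \<otimes> fst y \<oplus> d \<otimes> (snd x \<otimes> snd y), fst x \<otimes> snd y \<oplus> snd x \<otimes> fst y) \<otimes> fst z) =
          (fst x \<otimes> fst (fst y \<otimes> fst z \<oplus> d \<otimes> (snd y \<otimes> snd z), fst y \<otimes> snd z \<oplus> snd y \<otimes> fst z) \<oplus>
           d \<otimes> (snd x \<otimes> snd (fst y \<otimes> fst z \<oplus> d \<otimes> (snd y \<otimes> snd z), fst y \<otimes> snd z \<oplus> snd y \<otimes> fst z)),
           fst x \<otimes> snd (fst y \<otimes> fst z \<oplus> d \<otimes> (snd y \<otimes> snd z), fst y \<otimes> snd z \<oplus> snd y \<otimes> fst z) \<oplus>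
           snd x \<otimes> fst (fst y \<otimes> fst z \<oplus> d \<otimes> (snd y \<otimes> snd z), fst y \<otimes> snd z \<oplus> snd y \<otimes> fst z))"
      using e by simp
  next
    show "(\<one>, \<zero>) \<in> carrier R \<times> carrier R" by simp
  next
    fix x :: "'a \<times> 'a" assume x: "x \<in> carrier R \<times> carrier R"
    then show "(fst (\<one>, \<zero>) \<otimes> fst x \<oplus> d \<otimes> (snd (\<one>, \<zero>) \<otimes> snd x),
           fst (\<one>, \<zero>) \<otimes> snd x \<oplus> snd (\<one>, \<zero>) \<otimes> fst x) = x"
      using d by (cases x) simp
  qed
next
  fix x y z :: "'a \<times> 'a"
  assume x: "x \<in> carrier (qext R d)" and y: "y \<in> carrier (qext R d)"
    and z: "z \<in> carrier (qext R d)"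
  obtain x1 x2 y1 y2 z1 z2 where e: "x = (x1, x2)" "y = (y1, y2)" "z = (z1, z2)"
    by (cases x, cases y, cases z)
  have c: "x1 \<in> carrier R" "x2 \<in> carrier R" "y1 \<in> carrier R" "y2 \<in> carrier R"
     "z1 \<in> carrier R" "z2 \<in> carrier R" using x y z e by (auto simp: qext_simps)
  have "(x1 \<oplus> y1) \<otimes> z1 \<oplus> d \<otimes> ((x2 \<oplus> y2) \<otimes> z2)
     = (x1 \<otimes> z1 \<oplus> d \<otimes> (x2 \<otimes> z2)) \<oplus> (y1 \<otimes> z1 \<oplus> d \<otimes> (y2 \<otimes> z2))" using c d by algebra
  moreover have "(x1 \<oplus> y1) \<otimes> z2 \<oplus> (x2 \<oplus> y2) \<otimes> z1
     = (x1 \<otimes> z2 \<oplus> x2 \<otimes> z1) \<oplus> (y1 \<otimes> z2 \<oplus> y2 \<otimes> z1)" using c d by algebra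
  ultimately show "(x \<oplus>\<^bsub>qext R d\<^esub> y) \<otimes>\<^bsub>qext R d\<^esub> z = x \<otimes>\<^bsub>qext R d\<^esub> z \<oplus>\<^bsub>qext R d\<^esub> y \<otimes>\<^bsub>qext R d\<^esub> z"
    using e by (simp add: qext_simps)
qed

lemma (in field) qext_field:
  assumes d: "d \<in> carrier R" and ns: "\<forall>u\<in>carrier R. u \<otimes> u \<noteq> d"
  shows "field (qext R d)"
proof -
  interpret Q: cring "qext R d" by (rule qext_cring[OF d])
  show ?thesis
  proof (rule Q.cring_fieldI2)
    show "\<zero>\<^bsub>qext R d\<^esub> \<noteq> \<one>\<^bsub>qext R d\<^esub>" by (simp add: qext_simps)
  next
    fix x assume x: "x \<in> carrier (qext R d)" and nz: "x \<noteq> \<zero>\<^bsub>qext R d\<^esub>"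
    obtain a b where e: "x = (a, b)" by (cases x)
    have c: "a \<in> carrier R" "b \<in> carrier R" using x e by (auto simp: qext_simps)
    have nz': "a \<noteq> \<zero> \<or> b \<noteq> \<zero>" using nz e by (auto simp: qext_simps)
    define N where "N = a \<otimes> a \<ominus> d \<otimes> (b \<otimes> b)"
    have Nc: "N \<in> carrier R" using c d by (simp add: N_def)
    have Nn: "N \<noteq> \<zero>"
    proof
      assume N0: "N = \<zero>"
      have aa: "a \<otimes> a = d \<otimes> (b \<otimes> b)"
      proof -
        have "a \<otimes> a = N \<oplus> d \<otimes> (b \<otimes> b)" using c d unfolding N_def by algebra
        then show ?thesis using N0 c d by simp
      qed
      show False
      proof (cases "b = \<zero>")
        case True
        then have "a \<otimes> a = \<zero>" using aa d by simp
        then have "a = \<zero>" using c integral by blast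
        then show False using nz' True by simp
      next
        case False
        have u: "b \<in> Units R" using False c field_Units by auto
        define w where "w = a \<otimes> inv b"
        have wc: "w \<in> carrier R" using c u by (simp add: w_def)
        have ib: "inv b \<in> carrier R" "b \<otimes> inv b = \<one>" using u by auto
        have "w \<otimes> w = (a \<otimes> a) \<otimes> (inv b \<otimes> inv b)" using c ib unfolding w_def by algebra
        also have "\<dots> = (d \<otimes> (b \<otimes> b)) \<otimes> (inv b \<otimes> inv b)" using aa by simp
        also have "\<dots> = d \<otimes> ((b \<otimes> inv b) \<otimes> (b \<otimes> inv b))" using c ib(1) d by algebra
        also have "\<dots> = d" by (simp only: ib(2)) (simp add: d)
        finally show False using ns wc by blast
      qed
    qed
    have uN: "N \<in> Units R" using Nn Nc field_Units by auto
    have iN: "inv N \<in> carrier R" "N \<otimes> inv N = \<one>" using uN by auto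
    show "\<exists>y\<in>carrier (qext R d). x \<otimes>\<^bsub>qext R d\<^esub> y = \<one>\<^bsub>qext R d\<^esub>"
    proof (intro bexI)
      have 1: "a \<otimes> (a \<otimes> inv N) \<oplus> d \<otimes> (b \<otimes> (\<ominus> b \<otimes> inv N)) = N \<otimes> inv N"
        using c d iN unfolding N_def by algebra
      have 2: "a \<otimes> (\<ominus> b \<otimes> inv N) \<oplus> b \<otimes> (a \<otimes> inv N) = \<zero>"
        using c d iN by algebra
      show "x \<otimes>\<^bsub>qext R d\<^esub> (a \<otimes> inv N, \<ominus> b \<otimes> inv N) = \<one>\<^bsub>qext R d\<^esub>"
        using e 1 2 iN by (simp add: qext_simps)
      show "(a \<otimes> inv N, \<ominus> b \<otimes> inv N) \<in> carrier (qext R d)"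
        using c iN by (simp add: qext_simps)
    qed
  qed
qed

lemma (in field) nonsquare_exists:
  assumes fin: "finite (carrier R)" and ch: "\<one> \<oplus> \<one> \<noteq> \<zero>"
  shows "\<exists>d\<in>carrier R. \<forall>u\<in>carrier R. u \<otimes> u \<noteq> d"
proof (rule ccontr)
  assume a: "\<not> (\<exists>d\<in>carrier R. \<forall>u\<in>carrier R. u \<otimes> u \<noteq> d)"
  have sub: "carrier R \<subseteq> (\<lambda>u. u \<otimes> u) ` carrier R"
  proof
    fix x assume x: "x \<in> carrier R"
    then obtain u where u: "u \<in> carrier R" "u \<otimes> u = x" using a by blast
    show "x \<in> (\<lambda>u. u \<otimes> u) ` carrier R" by (rule image_eqI[of x _ u]) (use u in auto)
  qed
  have inj: "inj_on (\<lambda>u. u \<otimes> u) (carrier R)" by (rule finite_surj_inj[OF fin sub])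
  have m1: "\<ominus> \<one> \<in> carrier R" by simp
  have sq: "(\<ominus> \<one>) \<otimes> (\<ominus> \<one>) = \<one> \<otimes> \<one>"
    by (simp add: l_minus r_minus)
  have "\<ominus> \<one> = \<one>" using inj_onD[OF inj sq m1 one_closed] .
  then have "\<one> \<oplus> \<one> = \<ominus> \<one> \<oplus> \<one>" by simp
  also have "\<dots> = \<zero>" by (simp add: l_neg)
  finally show False using ch by simp
qed

lemma image_ring_add:
  assumes "inj_on f (carrier R)" "a \<in> carrier R" "b \<in> carrier R"
  shows "add (image_ring f R) (f a) (f b) = f (add R a b)"
  using assms by (simp add: image_ring_def image_group_def monoid.defs)

lemma image_ring_zero: "zero (image_ring f R) = f (zero R)"
  by (simp add: image_ring_def image_group_def monoid.defs)

lemma image_ring_char: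
  assumes "inj_on f (carrier R)" "one R \<in> carrier R" "zero R \<in> carrier R" "add R (one R) (one R) \<in> carrier R"
    "add R (one R) (one R) \<noteq> zero R"
  shows "add (image_ring f R) (one (image_ring f R)) (one (image_ring f R)) \<noteq> zero (image_ring f R)"
  using assms by (simp add: image_ring_one image_ring_add image_ring_zero inj_on_eq_iff)

lemma tower:
  "\<exists>R::nat ring. field R \<and> finite (carrier R) \<and> card (carrier R) = 3 ^ (2 ^ t)
      \<and> add R (one R) (one R) \<noteq> zero R"
proof (induction t)
  case 0
  interpret Z: residues_prime 3 "residue_ring (int 3)" by unfold_locales auto
  have inj: "inj_on nat (carrier (residue_ring (int 3)))"
    by (intro inj_onI) (auto simp: residue_ring_def eq_nat_nat_iff)
  have car: "carrier (residue_ring (int 3)) = {0, 1, 2}" by (auto simp: residue_ring_def)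
  have "field (image_ring nat (residue_ring (int 3)))" by (rule Z.inj_imp_image_ring_is_field[OF inj])
  moreover have "carrier (image_ring nat (residue_ring (int 3))) = {0, 1, 2}"
    using car by (simp add: image_ring_carrier)
  moreover have "add (image_ring nat (residue_ring (int 3))) (one (image_ring nat (residue_ring (int 3))))
     (one (image_ring nat (residue_ring (int 3)))) \<noteq> zero (image_ring nat (residue_ring (int 3)))"
    by (rule image_ring_char[OF inj]) (auto simp: residue_ring_def)
  ultimately show ?case by (intro exI[of _ "image_ring nat (residue_ring (int 3))"]) auto
next
  case (Suc t)
  then obtain R :: "nat ring" where R: "field R" "finite (carrier R)" "card (carrier R) = 3 ^ (2 ^ t)"
    "add R (one R) (one R) \<noteq> zero R" by blast
  interpret R: field R by (rule R(1))
  obtain d where d: "d \<in> carrier R" "\<forall>u\<in>carrier R. mult R u u \<noteq> d"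
    using R.nonsquare_exists[OF R(2) R(4)] by blast
  interpret Q: field "qext R d" by (rule R.qext_field[OF d])
  have inj: "inj_on prod_encode (carrier (qext R d))" by (rule inj_prod_encode)
  have "field (image_ring prod_encode (qext R d))" by (rule Q.inj_imp_image_ring_is_field[OF inj])
  moreover have "finite (carrier (image_ring prod_encode (qext R d)))"
    using R(2) by (simp add: image_ring_carrier qext_simps)
  moreover have "card (carrier (image_ring prod_encode (qext R d))) = 3 ^ (2 ^ Suc t)"
  proof -
    have "card (carrier (image_ring prod_encode (qext R d))) = card (carrier R \<times> carrier R)"
      using inj by (simp add: image_ring_carrier card_image qext_simps)
    also have "\<dots> = 3 ^ (2 ^ t) * 3 ^ (2 ^ t)" using R(3) by (simp add: card_cartesian_product)
    also have "\<dots> = 3 ^ (2 ^ Suc t)" by (simp add: power_add[symmetric])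
    finally show ?thesis .
  qed
  moreover have "add (image_ring prod_encode (qext R d)) (one (image_ring prod_encode (qext R d)))
     (one (image_ring prod_encode (qext R d))) \<noteq> zero (image_ring prod_encode (qext R d))"
    by (rule image_ring_char[OF inj]) (use R(4) in \<open>auto simp: qext_simps\<close>)
  ultimately show ?case by blast
qed

section \<open>Affine plane over a field\<close>

definition blk :: "('a, 'b) ring_scheme \<Rightarrow> 'a option \<Rightarrow> 'a \<times> 'a \<Rightarrow> 'a" where
  "blk R c p = (case c of None \<Rightarrow> fst p | Some m \<Rightarrow> a_minus R (snd p) (mult R m (fst p)))"

definition pos :: "'a option \<Rightarrow> 'a \<times> 'a \<Rightarrow> 'a" where
  "pos c p = (case c of None \<Rightarrow> snd p | Some m \<Rightarrow> fst p)"

definition cls :: "('a, 'b) ring_scheme \<Rightarrow> 'a option set" where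
  "cls S = insert None (Some ` (carrier S))"

lemma (in field) blk_closed:
  "c \<in> cls R \<Longrightarrow> p \<in> carrier R \<times> carrier R \<Longrightarrow> blk R c p \<in> carrier R"
  by (auto simp: blk_def cls_def)

lemma (in field) pos_closed:
  "p \<in> carrier R \<times> carrier R \<Longrightarrow> pos c p \<in> carrier R"
  by (auto simp: pos_def split: option.splits)

lemma (in field) blk_pos_inj:
  assumes c: "c \<in> cls R" and p: "p \<in> carrier R \<times> carrier R" and p': "p' \<in> carrier R \<times> carrier R"
    and e: "blk R c p = blk R c p'" "pos c p = pos c p'"
  shows "p = p'"
proof (cases c)
  case None
  then show ?thesis using e by (cases p, cases p') (auto simp: blk_def pos_def)
next
  case (Some m)
  then have m: "m \<in> carrier R" using c by (auto simp: cls_def)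
  obtain x y x' y' where pp: "p = (x, y)" "p' = (x', y')" by (cases p, cases p')
  have xx: "x = x'" using e Some pp by (simp add: pos_def)
  have cr: "x \<in> carrier R" "y \<in> carrier R" "y' \<in> carrier R" using p p' pp by auto
  have eq: "y \<ominus> m \<otimes> x = y' \<ominus> m \<otimes> x" using e Some pp xx by (simp add: blk_def)
  have "y = (y \<ominus> m \<otimes> x) \<oplus> m \<otimes> x" using cr m by algebra
  also have "\<dots> = (y' \<ominus> m \<otimes> x) \<oplus> m \<otimes> x" using eq by simp
  also have "\<dots> = y'" using cr m by algebra
  finally have "y = y'" .
  then show ?thesis using pp xx by simp
qed

lemma (in field) div_iff:
  assumes d: "d \<in> carrier R" "d \<noteq> \<zero>" and ms: "m \<in> carrier R" "s \<in> carrier R"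
  shows "m \<otimes> d = s \<longleftrightarrow> m = s \<otimes> inv d"
proof -
  have u: "d \<in> Units R" using d field_Units by auto
  have i: "inv d \<in> carrier R" "d \<otimes> inv d = \<one>" "inv d \<otimes> d = \<one>" using u by auto
  show ?thesis
  proof
    assume "m \<otimes> d = s"
    have "m = m \<otimes> (d \<otimes> inv d)" using i ms by simp
    also have "\<dots> = (m \<otimes> d) \<otimes> inv d" using i ms d by (simp add: m_assoc)
    finally show "m = s \<otimes> inv d" using \<open>m \<otimes> d = s\<close> by simp
  next
    assume "m = s \<otimes> inv d"
    then have "m \<otimes> d = s \<otimes> (inv d \<otimes> d)" using i ms d by (simp add: m_assoc)
    then show "m \<otimes> d = s" using i ms by simp
  qed
qed

lemma (in field) one_class:
  assumes p: "p \<in> carrier R \<times> carrier R" and p': "p' \<in> carrier R \<times> carrier R" and ne: "p \<noteq> p'"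
  shows "card {c \<in> cls R. blk R c p = blk R c p'} = 1"
proof -
  obtain x y x' y' where pp: "p = (x, y)" "p' = (x', y')" by (cases p, cases p')
  have cr: "x \<in> carrier R" "y \<in> carrier R" "x' \<in> carrier R" "y' \<in> carrier R" using p p' pp by auto
  show ?thesis
  proof (cases "x = x'")
    case True
    then have yy: "y \<noteq> y'" using ne pp by simp
    have "{c \<in> cls R. blk R c p = blk R c p'} = {None}"
    proof (intro equalityI subsetI)
      fix c :: "'a option" assume c: "c \<in> {c \<in> cls R. blk R c p = blk R c p'}"
      show "c \<in> {None}"
      proof (cases c)
        case (Some m)
        then have m: "m \<in> carrier R" using c by (auto simp: cls_def)
        have eq: "y \<ominus> m \<otimes> x = y' \<ominus> m \<otimes> x" using c Some pp True by (simp add: blk_def)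
        have "y = (y \<ominus> m \<otimes> x) \<oplus> m \<otimes> x" using cr m by algebra
        also have "\<dots> = (y' \<ominus> m \<otimes> x) \<oplus> m \<otimes> x" using eq by simp
        also have "\<dots> = y'" using cr m by algebra
        finally show ?thesis using yy by simp
      qed simp
    next
      fix c :: "'a option" assume "c \<in> {None}"
      then show "c \<in> {c \<in> cls R. blk R c p = blk R c p'}" using True pp by (simp add: cls_def blk_def)
    qed
    then show ?thesis by simp
  next
    case False
    define d where "d = x \<ominus> x'"
    have dc: "d \<in> carrier R" using cr by (simp add: d_def)
    have dn: "d \<noteq> \<zero>"
    proof
      assume "d = \<zero>"
      have "x = (x \<ominus> x') \<oplus> x'" using cr by algebra
      also have "\<dots> = x'" using \<open>d = \<zero>\<close> cr by (simp add: d_def)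
      finally show False using False by simp
    qed
    define m0 where "m0 = (y \<ominus> y') \<otimes> inv d"
    have m0c: "m0 \<in> carrier R" using dc dn cr field_Units by (auto simp: m0_def)
    have key: "blk R (Some m) p = blk R (Some m) p' \<longleftrightarrow> m = m0" if m: "m \<in> carrier R" for m
    proof -
      have "blk R (Some m) p = blk R (Some m) p' \<longleftrightarrow> y \<ominus> m \<otimes> x = y' \<ominus> m \<otimes> x'"
        using pp by (simp add: blk_def)
      also have "\<dots> \<longleftrightarrow> m \<otimes> d = y \<ominus> y'"
      proof
        assume h: "y \<ominus> m \<otimes> x = y' \<ominus> m \<otimes> x'"
        have "m \<otimes> d = (y \<ominus> y') \<ominus> ((y \<ominus> m \<otimes> x) \<ominus> (y' \<ominus> m \<otimes> x'))"
          using cr m unfolding d_def by algebra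
        also have "\<dots> = y \<ominus> y'" using h cr m by simp algebra
        finally show "m \<otimes> d = y \<ominus> y'" .
      next
        assume h: "m \<otimes> d = y \<ominus> y'"
        have "y \<ominus> m \<otimes> x = (y' \<ominus> m \<otimes> x') \<oplus> ((y \<ominus> y') \<ominus> m \<otimes> d)"
          using cr m unfolding d_def by algebra
        also have "\<dots> = y' \<ominus> m \<otimes> x'" using h cr m by simp algebra
        finally show "y \<ominus> m \<otimes> x = y' \<ominus> m \<otimes> x'" .
      qed
      also have "\<dots> \<longleftrightarrow> m = m0" unfolding m0_def using div_iff[OF dc dn m] cr by simp
      finally show ?thesis .
    qed
    have "{c \<in> cls R. blk R c p = blk R c p'} = {Some m0}"
    proof (intro equalityI subsetI)
      fix c :: "'a option" assume c: "c \<in> {c \<in> cls R. blk R c p = blk R c p'}"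
      show "c \<in> {Some m0}"
      proof (cases c)
        case None
        then show ?thesis using c pp False by (simp add: blk_def)
      next
        case (Some m)
        then have m: "m \<in> carrier R" using c by (auto simp: cls_def)
        then show ?thesis using key c Some by auto
      qed
    next
      fix c :: "'a option" assume "c \<in> {Some m0}"
      then show "c \<in> {c \<in> cls R. blk R c p = blk R c p'}" using key[OF m0c] m0c by (auto simp: cls_def)
    qed
    then show ?thesis by simp
  qed
qed

section \<open>The plane construction\<close>

lemma lexlt:
  fixes a a' b b' M :: nat
  assumes "b \<le> M" "b' \<le> M"
  shows "(a * (M + 1) + b < a' * (M + 1) + b') \<longleftrightarrow> (a < a' \<or> a = a' \<and> b < b')"
proof -
  have B: "a * (M + 1) + b < a' * (M + 1) + b'" if "a < a'" "b \<le> M" for a a' b b' :: nat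
  proof -
    have "a * (M + 1) + b \<le> a * (M + 1) + M" using that by simp
    also have "\<dots> < (a + 1) * (M + 1)" by simp
    also have "\<dots> \<le> a' * (M + 1)" using that by (intro mult_right_mono) auto
    finally show ?thesis by simp
  qed
  show ?thesis
  proof (cases a a' rule: linorder_cases)
    case less
    then show ?thesis using B assms by auto
  next
    case equal
    then show ?thesis by auto
  next
    case greater
    have "a' * (M + 1) + b' < a * (M + 1) + b" using B[of a' a b' b] greater assms by blast
    then show ?thesis using greater by linarith
  qed
qed

lemma lexeq:
  fixes a a' b b' M :: nat
  assumes "b \<le> M" "b' \<le> M"
  shows "(a * (M + 1) + b = a' * (M + 1) + b') \<longleftrightarrow> (a = a' \<and> b = b')"
  using lexlt[OF assms, of a a'] lexlt[OF assms(2,1), of a' a] by auto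

lemma third_elem:
  assumes "finite K" "3 \<le> card K"
  shows "\<exists>c\<in>K. c \<noteq> a \<and> c \<noteq> b"
proof -
  show ?thesis
  proof (rule ccontr)
    assume "\<not> ?thesis"
    then have "K \<subseteq> {a, b}" by auto
    then have "card K \<le> card {a, b}" by (intro card_mono) auto
    also have "\<dots> \<le> 2" by (simp add: card_insert_if)
    finally show False using assms by simp
  qed
qed

lemma cnt_add_cong:
  assumes "\<And>r. r \<in># Y \<Longrightarrow> (if P r then 1 else 0) + (if Q r then 1 else 0)
       = (if S r then 1 else 0) + (if T r then 1 else (0::nat))"
  shows "size (filter_mset P Y) + size (filter_mset Q Y) = size (filter_mset S Y) + size (filter_mset T Y)"
proof -
  have "size (filter_mset P Y) + size (filter_mset Q Y)
      = (\<Sum>r\<in>#Y. (if P r then 1 else 0) + (if Q r then 1 else (0::nat)))"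
    by (simp only: size_filter_sum sum_mset.distrib)
  also have "\<dots> = (\<Sum>r\<in>#Y. (if S r then 1 else 0) + (if T r then 1 else (0::nat)))"
    by (rule sum_mset_cong') (rule assms)
  also have "\<dots> = size (filter_mset S Y) + size (filter_mset T Y)"
    by (simp only: size_filter_sum sum_mset.distrib)
  finally show ?thesis .
qed

definition Mx :: "'a set \<Rightarrow> ('a \<Rightarrow> nat) \<Rightarrow> nat" where
  "Mx K r = Max (r ` K)"

definition rk :: "('a, 'b) ring_scheme \<Rightarrow> 'a option \<Rightarrow> bool \<Rightarrow> ('a \<Rightarrow> nat) \<Rightarrow> 'a \<times> 'a \<Rightarrow> nat" where
  "rk R c fl r p = r (blk R c p) * (Mx (carrier R) r + 1) +
     (if fl then Mx (carrier R) r - r (pos c p) else r (pos c p))"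

definition planeY :: "('a, 'b) ring_scheme \<Rightarrow> ('a \<Rightarrow> nat) multiset \<Rightarrow> ('a \<times> 'a \<Rightarrow> nat) multiset" where
  "planeY R Y = (\<Sum>c\<in>cls R. image_mset (rk R c False) Y + image_mset (rk R c True) Y)"

lemma size_filter_sum_set:
  "finite C \<Longrightarrow> size (filter_mset P (\<Sum>c\<in>C. f c)) = (\<Sum>c\<in>C. size (filter_mset P (f c)))"
  by (induction rule: finite_induct) auto

lemma in_sum_set:
  "finite C \<Longrightarrow> x \<in># (\<Sum>c\<in>C. f c) \<Longrightarrow> \<exists>c\<in>C. x \<in># f c"
  by (induction rule: finite_induct) auto

lemma card_cls: "finite (carrier R) \<Longrightarrow> card (cls R) = card (carrier R) + 1"
  unfolding cls_def by (simp add: card_image image_iff)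

lemma sum_if_const:
  "finite C \<Longrightarrow> (\<Sum>c\<in>C. if P c then (k::nat) else 0) = k * card {c\<in>C. P c}"
  by (simp add: sum.inter_filter[symmetric])

locale plane = field +
  fixes L :: nat and Y :: "('a \<Rightarrow> nat) multiset"
  assumes fin: "finite (carrier R)" and card3: "3 \<le> card (carrier R)"
    and P: "psca (carrier R) L Y"
begin

lemma Y_inj: "r \<in># Y \<Longrightarrow> inj_on r (carrier R)"
  using P unfolding psca_def by auto

lemma le_Mx: "a \<in> carrier R \<Longrightarrow> r a \<le> Mx (carrier R) r"
  unfolding Mx_def using fin by simp

lemma rk_lt:
  assumes r: "r \<in># Y" and c: "c \<in> cls R" and p: "p \<in> carrier R \<times> carrier R"
    and p': "p' \<in> carrier R \<times> carrier R"
  shows "rk R c fl r p < rk R c fl r p' \<longleftrightarrow>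
    (r (blk R c p) < r (blk R c p') \<or> blk R c p = blk R c p' \<and>
      (if fl then r (pos c p') < r (pos c p) else r (pos c p) < r (pos c p')))"
proof -
  let ?M = "Mx (carrier R) r"
  have bc: "blk R c p \<in> carrier R" "blk R c p' \<in> carrier R" using blk_closed c p p' by auto
  have pc: "pos c p \<in> carrier R" "pos c p' \<in> carrier R" using pos_closed p p' by auto
  have le: "r (pos c p) \<le> ?M" "r (pos c p') \<le> ?M" using pc le_Mx by auto
  have injb: "r (blk R c p) = r (blk R c p') \<longleftrightarrow> blk R c p = blk R c p'"
    using Y_inj[OF r] bc by (auto simp: inj_on_def)
  have l1: "(if fl then ?M - r (pos c p) else r (pos c p)) \<le> ?M" using le by auto
  have l2: "(if fl then ?M - r (pos c p') else r (pos c p')) \<le> ?M" using le by auto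
  show ?thesis
    unfolding rk_def lexlt[OF l1 l2] injb using le by auto
qed

lemma rk_inj:
  assumes r: "r \<in># Y" and c: "c \<in> cls R"
  shows "inj_on (rk R c fl r) (carrier R \<times> carrier R)"
proof (rule inj_onI)
  fix p p' assume p: "p \<in> carrier R \<times> carrier R" and p': "p' \<in> carrier R \<times> carrier R"
    and e: "rk R c fl r p = rk R c fl r p'"
  let ?M = "Mx (carrier R) r"
  have bc: "blk R c p \<in> carrier R" "blk R c p' \<in> carrier R" using blk_closed c p p' by auto
  have pc: "pos c p \<in> carrier R" "pos c p' \<in> carrier R" using pos_closed p p' by auto
  have le: "r (pos c p) \<le> ?M" "r (pos c p') \<le> ?M" using pc le_Mx by auto
  have l1: "(if fl then ?M - r (pos c p) else r (pos c p)) \<le> ?M" using le by auto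
  have l2: "(if fl then ?M - r (pos c p') else r (pos c p')) \<le> ?M" using le by auto
  from e have "r (blk R c p) = r (blk R c p') \<and>
      (if fl then ?M - r (pos c p) else r (pos c p)) = (if fl then ?M - r (pos c p') else r (pos c p'))"
    unfolding rk_def lexeq[OF l1 l2] .
  then have "r (blk R c p) = r (blk R c p')" "r (pos c p) = r (pos c p')" using le by (auto split: if_splits)
  then have "blk R c p = blk R c p'" "pos c p = pos c p'"
    using Y_inj[OF r] bc pc by (auto simp: inj_on_def)
  then show "p = p'" using blk_pos_inj c p p' by blast
qed

lemma Pcnt: "a \<in> carrier R \<Longrightarrow> b \<in> carrier R \<Longrightarrow> d \<in> carrier R \<Longrightarrow> a \<noteq> b \<Longrightarrow> b \<noteq> d \<Longrightarrow> a \<noteq> d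
  \<Longrightarrow> size (filter_mset (\<lambda>r. r a < r b \<and> r b < r d) Y) = L"
  using P unfolding psca_def by blast

lemma Ppair: "a \<in> carrier R \<Longrightarrow> b \<in> carrier R \<Longrightarrow> a \<noteq> b
  \<Longrightarrow> size (filter_mset (\<lambda>r. r a < r b) Y) = 3 * L"
  using third_elem[OF fin card3, of a b] psca_pair[OF P] by blast

lemma class_count:
  assumes x: "x \<in> carrier R \<times> carrier R" and y: "y \<in> carrier R \<times> carrier R"
    and z: "z \<in> carrier R \<times> carrier R" and d: "x \<noteq> y" "y \<noteq> z" "x \<noteq> z"
    and c: "c \<in> cls R"
  shows "size (filter_mset (\<lambda>s. s x < s y \<and> s y < s z) (image_mset (rk R c False) Y))
       + size (filter_mset (\<lambda>s. s x < s y \<and> s y < s z) (image_mset (rk R c True) Y))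
       + (if blk R c x = blk R c z then 2 * L else 0)
     = 2 * L + (if blk R c x = blk R c y then L else 0) + (if blk R c y = blk R c z then L else 0)"
proof -
  define bX bY bZ where "bX = blk R c x" "bY = blk R c y" "bZ = blk R c z"
  define px py pz where "px = pos c x" "py = pos c y" "pz = pos c z"
  have bc: "bX \<in> carrier R" "bY \<in> carrier R" "bZ \<in> carrier R"
    using blk_closed c x y z by (auto simp: bX_bY_bZ_def)
  have pc: "px \<in> carrier R" "py \<in> carrier R" "pz \<in> carrier R"
    using pos_closed x y z by (auto simp: px_py_pz_def)
  have ptw: "(rk R c fl r x < rk R c fl r y \<and> rk R c fl r y < rk R c fl r z) \<longleftrightarrow>
     (r bX < r bY \<or> bX = bY \<and> (if fl then r py < r px else r px < r py)) \<and>
     (r bY < r bZ \<or> bY = bZ \<and> (if fl then r pz < r py else r py < r pz))" if r: "r \<in># Y" for r fl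
    using rk_lt[OF r c x y, of fl] rk_lt[OF r c y z, of fl] unfolding bX_bY_bZ_def px_py_pz_def by simp
  have injr: "r a = r b \<longleftrightarrow> a = b" if "r \<in># Y" "a \<in> carrier R" "b \<in> carrier R" for r a b
    using Y_inj[OF that(1)] that(2,3) by (auto simp: inj_on_def)
  have pne: "px \<noteq> py" if "bX = bY" using blk_pos_inj[OF c x y] d that by (auto simp: bX_bY_bZ_def px_py_pz_def)
  have pne2: "py \<noteq> pz" if "bY = bZ" using blk_pos_inj[OF c y z] d that by (auto simp: bX_bY_bZ_def px_py_pz_def)
  have pne3: "px \<noteq> pz" if "bX = bZ" using blk_pos_inj[OF c x z] d that by (auto simp: bX_bY_bZ_def px_py_pz_def)
  have LHS: "size (filter_mset (\<lambda>s. s x < s y \<and> s y < s z) (image_mset (rk R c False) Y))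
       + size (filter_mset (\<lambda>s. s x < s y \<and> s y < s z) (image_mset (rk R c True) Y))
     = size (filter_mset (\<lambda>r. rk R c False r x < rk R c False r y \<and> rk R c False r y < rk R c False r z) Y)
       + size (filter_mset (\<lambda>r. rk R c True r x < rk R c True r y \<and> rk R c True r y < rk R c True r z) Y)"
    by (simp add: filter_mset_image_mset)
  show ?thesis
  proof (cases "bX = bY")
    case xy: True
    show ?thesis
    proof (cases "bY = bZ")
      case yz: True
      have "size (filter_mset (\<lambda>r. rk R c False r x < rk R c False r y \<and> rk R c False r y < rk R c False r z) Y)
       + size (filter_mset (\<lambda>r. rk R c True r x < rk R c True r y \<and> rk R c True r y < rk R c True r z) Y)
       = size (filter_mset (\<lambda>r. r px < r py \<and> r py < r pz) Y)
       + size (filter_mset (\<lambda>r. r pz < r py \<and> r py < r px) Y)"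
        by (rule cnt_add_cong) (simp add: ptw xy yz)
      also have "\<dots> = L + L"
      proof -
        have n: "px \<noteq> py" "py \<noteq> pz" "px \<noteq> pz" using pne[OF xy] pne2[OF yz] pne3 xy yz by auto
        show ?thesis using Pcnt[OF pc(1) pc(2) pc(3)] Pcnt[OF pc(3) pc(2) pc(1)] n by auto
      qed
      finally show ?thesis using LHS xy yz by (simp add: bX_bY_bZ_def)
    next
      case yz: False
      have "size (filter_mset (\<lambda>r. rk R c False r x < rk R c False r y \<and> rk R c False r y < rk R c False r z) Y)
       + size (filter_mset (\<lambda>r. rk R c True r x < rk R c True r y \<and> rk R c True r y < rk R c True r z) Y)
       = size (filter_mset (\<lambda>r. r bX < r bZ) Y) + size (filter_mset (\<lambda>r. False) Y)"
      proof (rule cnt_add_cong)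
        fix r assume r: "r \<in># Y"
        have "r px \<noteq> r py" using injr[OF r pc(1,2)] pne xy by simp
        then show "(if rk R c False r x < rk R c False r y \<and> rk R c False r y < rk R c False r z then 1 else 0) +
          (if rk R c True r x < rk R c True r y \<and> rk R c True r y < rk R c True r z then 1 else 0) =
          (if r bX < r bZ then 1 else 0) + (if False then 1 else (0::nat))"
          using yz xy by (simp add: ptw[OF r])
      qed
      also have "\<dots> = 3 * L" using Ppair bc xy yz by simp
      finally show ?thesis using LHS xy yz by (simp add: bX_bY_bZ_def)
    qed
  next
    case xy: False
    show ?thesis
    proof (cases "bY = bZ")
      case yz: True
      have "size (filter_mset (\<lambda>r. rk R c False r x < rk R c False r y \<and> rk R c False r y < rk R c False r z) Y)
       + size (filter_mset (\<lambda>r. rk R c True r x < rk R c True r y \<and> rk R c True r y < rk R c True r z) Y)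
       = size (filter_mset (\<lambda>r. r bX < r bY) Y) + size (filter_mset (\<lambda>r. False) Y)"
      proof (rule cnt_add_cong)
        fix r assume r: "r \<in># Y"
        have "r py \<noteq> r pz" using injr[OF r pc(2,3)] pne2 yz by simp
        then show "(if rk R c False r x < rk R c False r y \<and> rk R c False r y < rk R c False r z then 1 else 0) +
          (if rk R c True r x < rk R c True r y \<and> rk R c True r y < rk R c True r z then 1 else 0) =
          (if r bX < r bY then 1 else 0) + (if False then 1 else (0::nat))"
          using yz xy by (simp add: ptw[OF r])
      qed
      also have "\<dots> = 3 * L" using Ppair bc xy yz by simp
      finally show ?thesis using LHS xy yz by (simp add: bX_bY_bZ_def)
    next
      case yz: False
      show ?thesis
      proof (cases "bX = bZ")
        case xz: True
        have "size (filter_mset (\<lambda>r. rk R c False r x < rk R c False r y \<and> rk R c False r y < rk R c False r z) Y)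
         + size (filter_mset (\<lambda>r. rk R c True r x < rk R c True r y \<and> rk R c True r y < rk R c True r z) Y)
         = size (filter_mset (\<lambda>r. False) Y) + size (filter_mset (\<lambda>r. False) Y)"
        proof (rule cnt_add_cong)
          fix r assume r: "r \<in># Y"
          show "(if rk R c False r x < rk R c False r y \<and> rk R c False r y < rk R c False r z then 1 else 0) +
            (if rk R c True r x < rk R c True r y \<and> rk R c True r y < rk R c True r z then 1 else 0) =
            (if False then 1 else 0) + (if False then 1 else (0::nat))"
            using yz xy xz by (simp add: ptw[OF r])
        qed
        then show ?thesis using LHS xy yz xz by (simp add: bX_bY_bZ_def)
      next
        case xz: False
        have "size (filter_mset (\<lambda>r. rk R c False r x < rk R c False r y \<and> rk R c False r y < rk R c False r z) Y)
         + size (filter_mset (\<lambda>r. rk R c True r x < rk R c True r y \<and> rk R c True r y < rk R c True r z) Y)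
         = size (filter_mset (\<lambda>r. r bX < r bY \<and> r bY < r bZ) Y) + size (filter_mset (\<lambda>r. r bX < r bY \<and> r bY < r bZ) Y)"
          by (rule cnt_add_cong) (simp add: ptw xy yz xz)
        also have "\<dots> = L + L" using Pcnt bc xy yz xz by simp
        finally show ?thesis using LHS xy yz xz by (simp add: bX_bY_bZ_def)
      qed
    qed
  qed
qed

lemma plane_psca: "psca (carrier R \<times> carrier R) (2 * (card (carrier R) + 1) * L) (planeY R Y)"
  unfolding psca_def
proof (intro conjI ballI impI)
  have fc: "finite (cls R)" using fin by (simp add: cls_def)
  fix s assume "s \<in># planeY R Y"
  then have "s \<in># (\<Sum>c\<in>cls R. image_mset (rk R c False) Y + image_mset (rk R c True) Y)"
    unfolding planeY_def .
  from in_sum_set[OF fc this] obtain c where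
    c: "c \<in> cls R" "s \<in># image_mset (rk R c False) Y + image_mset (rk R c True) Y" ..
  then have "(\<exists>r\<in>#Y. s = rk R c False r) \<or> (\<exists>r\<in>#Y. s = rk R c True r)" by auto
  then obtain r fl where "r \<in># Y" "s = rk R c fl r" by blast
  then show "inj_on s (carrier R \<times> carrier R)" using rk_inj c(1) by blast
next
  have fc: "finite (cls R)" using fin by (simp add: cls_def)
  fix x y z assume x: "x \<in> carrier R \<times> carrier R" and y: "y \<in> carrier R \<times> carrier R"
    and z: "z \<in> carrier R \<times> carrier R" and d: "x \<noteq> y \<and> y \<noteq> z \<and> x \<noteq> z"
  let ?F = "\<lambda>s. s x < s y \<and> s y < s z"
  define v where "v c = size (filter_mset ?F (image_mset (rk R c False) Y))
       + size (filter_mset ?F (image_mset (rk R c True) Y))" for c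
  have cnt: "size (filter_mset ?F (planeY R Y)) = (\<Sum>c\<in>cls R. v c)"
    unfolding planeY_def v_def by (simp add: size_filter_sum_set[OF fc])
  have "(\<Sum>c\<in>cls R. v c + (if blk R c x = blk R c z then 2 * L else 0))
     = (\<Sum>c\<in>cls R. 2 * L + (if blk R c x = blk R c y then L else 0) + (if blk R c y = blk R c z then L else 0))"
    by (rule sum.cong) (use class_count[OF x y z] d v_def in auto)
  then have "(\<Sum>c\<in>cls R. v c) + 2 * L * card {c \<in> cls R. blk R c x = blk R c z}
     = 2 * L * card (cls R) + L * card {c \<in> cls R. blk R c x = blk R c y}
       + L * card {c \<in> cls R. blk R c y = blk R c z}"
    by (simp add: sum.distrib sum_if_const[OF fc])
  then have "(\<Sum>c\<in>cls R. v c) + 2 * L = 2 * L * (card (carrier R) + 1) + L + L"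
    using one_class x y z d card_cls[OF fin] by simp
  then show "size (filter_mset ?F (planeY R Y)) = 2 * (card (carrier R) + 1) * L"
    using cnt by (simp add: algebra_simps)
qed

end


lemma psca_main: "\<exists>Y. psca {..<(3::nat) ^ (2 ^ t)} (lam (2 ^ t)) Y"
proof (induction t)
  case 0
  show ?case using base_psca by (intro exI[of _ base_Y]) simp
next
  case (Suc t)
  then obtain Y0 where Y0: "psca {..<(3::nat) ^ (2 ^ t)} (lam (2 ^ t)) Y0" by blast
  obtain R :: "nat ring" where R: "field R" "finite (carrier R)" "card (carrier R) = 3 ^ (2 ^ t)"
    using tower[of t] by blast
  obtain h where h: "bij_betw h (carrier R) {..<(3::nat) ^ (2 ^ t)}"
    using finite_same_card_bij[OF R(2), of "{..<(3::nat) ^ (2 ^ t)}"] R(3) by auto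
  define Y1 where "Y1 = image_mset (\<lambda>r. r \<circ> h) Y0"
  have P1: "psca (carrier R) (lam (2 ^ t)) Y1" unfolding Y1_def by (rule psca_transport[OF h Y0])
  have c3: "3 \<le> card (carrier R)"
  proof -
    have "(3::nat) ^ 1 \<le> 3 ^ (2 ^ t)" by (intro power_increasing) auto
    then show ?thesis using R(3) by simp
  qed
  interpret plane R "lam (2 ^ t)" Y1
    by (rule plane.intro[OF R(1)]) (unfold_locales, fact R(2), fact c3, fact P1)
  have P2: "psca (carrier R \<times> carrier R) (2 * (card (carrier R) + 1) * lam (2 ^ t)) (planeY R Y1)"
    by (rule plane_psca)
  have "card (carrier R \<times> carrier R) = 3 ^ (2 ^ Suc t)"
    using R(3) by (simp add: card_cartesian_product power_add[symmetric])
  then obtain h2 where h2: "bij_betw h2 {..<(3::nat) ^ (2 ^ Suc t)} (carrier R \<times> carrier R)"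
    using finite_same_card_bij[of "{..<(3::nat) ^ (2 ^ Suc t)}" "carrier R \<times> carrier R"] R(2) by auto
  have "lam (2 ^ Suc t) = 2 * (card (carrier R) + 1) * lam (2 ^ t)"
    by (simp only: lam_step R(3))
  then show ?case using psca_transport[OF h2 P2] by auto
qed

lemma g_bound: "g (3 ^ (2 ^ t)) 3 \<le> lam (2 ^ t)" and lam_pos: "0 < lam (2 ^ t)"
proof -
  have pos: "0 < lam (2 ^ t)"
  proof -
    have "(1::real) < 3 ^ (2 ^ t)" by (rule one_less_power) auto
    then have "0 < real (lam (2 ^ t))" by (simp add: lam_formula)
    then show ?thesis by simp
  qed
  then show "0 < lam (2 ^ t)" .
  define n where "n = (3::nat) ^ (2 ^ t)"
  obtain Y where Y: "psca {..<n} (lam (2 ^ t)) Y" using psca_main[of t] n_def by blast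
  have hb: "bij_betw (\<lambda>x. x - 1) {1..n} {..<n}"
  proof (rule bij_betw_byWitness[where f' = "\<lambda>x. x + 1"])
  qed auto
  have "psca {1..n} (lam (2 ^ t)) (image_mset (\<lambda>r. r \<circ> (\<lambda>x. x - 1)) Y)"
    by (rule psca_transport[OF hb Y])
  then have "is_PSCA n 3 (lam (2 ^ t)) (image_mset (\<lambda>r. sort_key r [1..<Suc n]) (image_mset (\<lambda>r. r \<circ> (\<lambda>x. x - 1)) Y))"
    by (rule psca_to_isPSCA)
  then have "0 < lam (2 ^ t) \<and> (\<exists>X. is_PSCA n 3 (lam (2 ^ t)) X)" using pos by blast
  then show "g (3 ^ (2 ^ t)) 3 \<le> lam (2 ^ t)" unfolding g_def n_def by (rule Least_le)
qed

theorem mainTheorem6: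
  shows "(\<forall>t::nat. real (lam (2 ^ t)) = 2 powr (real t - 1) * (3 ^ (2 ^ t) - 1))
       \<and> (\<forall>t::nat. \<forall>n::nat. n = 3 ^ (2 ^ t) \<longrightarrow> real (g n 3) \<le> 1/2 * real n * log 3 (real n))"
proof (intro conjI allI impI)
  fix t :: nat
  show "real (lam (2 ^ t)) = 2 powr (real t - 1) * (3 ^ (2 ^ t) - 1)" by (rule lam_formula)
next
  fix t n :: nat assume n: "n = 3 ^ (2 ^ t)"
  have lg: "log 3 (real n) = 2 ^ t"
    using n by (simp add: log_nat_power)
  have pw: "(2::real) powr (real t - 1) = 2 ^ t / 2"
    by (simp add: powr_diff powr_realpow)
  have "real (g n 3) \<le> real (lam (2 ^ t))" using g_bound n by simp
  also have "\<dots> = 2 ^ t / 2 * (real n - 1)" using lam_formula[of t] pw n by simp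
  also have "\<dots> \<le> 1/2 * real n * log 3 (real n)" using lg by simp
  finally show "real (g n 3) \<le> 1/2 * real n * log 3 (real n)" .
qed

end
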